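(* Let $\mathcal{X}$ be the set of order types of linear orders that embed into $U$. Then $\mathcal{X}$ is closed under $\cdot_\omega$ and $\cdot_\omega$ is associative on $\mathcal{X}$; i.e. $\langle\mathcal{X},\cdot_\omega\rangle$ is a semigroup.
   Context: The countable condensation $\sim_\omega$ on a linear order $L$: $x\sim_\omega y$ iff the closed interval between $x$ and $y$ is countable; $L/\!\sim_\omega$ is the linear order of its classes. $ML$ denotes the lexicographic product (each element of $M$ replaced by a copy of $L$). $M\cdot_\omega L$ is the order type of $ML/\!\sim_\omega$. $U$ is the linear order $R^*+\mathbb{Q}+R$, where $R$ is obtained from $\omega_1$ by replacing each $\alpha<\omega_1$ with a point $u_\alpha$ followed by a copy of the rationals, $R^*$ is the reverse of $R$, and the middle summand is a copy of the rationals. *)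

theory Defs
  imports Main "HOL-Library.Countable_Set"
begin

text \<open>Linear orders are represented as non-strict order relations (Linear_order r),
  with carrier Field r.\<close>

definition order_embeds :: "'a rel \<Rightarrow> 'b rel \<Rightarrow> bool" where
  "order_embeds r s \<longleftrightarrow> (\<exists>f. inj_on f (Field r) \<and> f ` Field r \<subseteq> Field s \<and>
     (\<forall>x\<in>Field r. \<forall>y\<in>Field r. (x, y) \<in> r \<longleftrightarrow> (f x, f y) \<in> s))"

definition order_iso :: "'a rel \<Rightarrow> 'b rel \<Rightarrow> bool" where
  "order_iso r s \<longleftrightarrow> (\<exists>f. bij_betw f (Field r) (Field s) \<and>
     (\<forall>x\<in>Field r. \<forall>y\<in>Field r. (x, y) \<in> r \<longleftrightarrow> (f x, f y) \<in> s))"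

text \<open>Lexicographic product ML: each element of M replaced by a copy of L.\<close>
definition lexprod :: "'a rel \<Rightarrow> 'b rel \<Rightarrow> ('a \<times> 'b) rel" where
  "lexprod M L = {((m, l), (m', l')). m \<in> Field M \<and> m' \<in> Field M \<and> l \<in> Field L \<and> l' \<in> Field L \<and>
      (((m, m') \<in> M \<and> m \<noteq> m') \<or> (m = m' \<and> (l, l') \<in> L))}"

definition closed_interval :: "'a rel \<Rightarrow> 'a \<Rightarrow> 'a \<Rightarrow> 'a set" where
  "closed_interval r x y = {z \<in> Field r. ((x, z) \<in> r \<and> (z, y) \<in> r) \<or> ((y, z) \<in> r \<and> (z, x) \<in> r)}"

definition count_equiv :: "'a rel \<Rightarrow> 'a rel" where
  "count_equiv r = {(x, y). x \<in> Field r \<and> y \<in> Field r \<and> countable (closed_interval r x y)}"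

definition count_cond :: "'a rel \<Rightarrow> 'a set rel" where
  "count_cond r = {(C, D). C \<in> Field r // count_equiv r \<and> D \<in> Field r // count_equiv r \<and>
      (\<exists>x\<in>C. \<exists>y\<in>D. (x, y) \<in> r)}"

definition omega_mult :: "'a rel \<Rightarrow> 'b rel \<Rightarrow> ('a \<times> 'b) set rel" where
  "omega_mult M L = count_cond (lexprod M L)"

definition osum :: "'a rel \<Rightarrow> 'b rel \<Rightarrow> ('a + 'b) rel" where
  "osum r s = {(Inl x, Inl y) | x y. (x, y) \<in> r} \<union> {(Inr x, Inr y) | x y. (x, y) \<in> s}
     \<union> {(Inl x, Inr y) | x y. x \<in> Field r \<and> y \<in> Field s}"

abbreviation omega1 :: "nat set rel" where
  "omega1 \<equiv> cardSuc natLeq"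

definition ratQ :: "rat rel" where
  "ratQ = {(p, q). p \<le> q}"

definition pointQ :: "rat option rel" where
  "pointQ = {(a, b). case a of None \<Rightarrow> True
                     | Some p \<Rightarrow> (case b of None \<Rightarrow> False | Some q \<Rightarrow> p \<le> q)}"

text \<open>R: omega_1 with each alpha replaced by u_alpha followed by a copy of Q.\<close>
definition R_order :: "(nat set \<times> rat option) rel" where
  "R_order = lexprod omega1 pointQ"

definition U_order :: "((nat set \<times> rat option) + (rat + (nat set \<times> rat option))) rel" where
  "U_order = osum (converse R_order) (osum ratQ R_order)"

definition in_X :: "'a rel \<Rightarrow> bool" where
  "in_X r \<longleftrightarrow> Linear_order r \<and> order_embeds r U_order"

end

theory Submission imports Defs "HOL-Library.Countable_Set_Type" begin

context includes cardinal_syntax begin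
lemma omega1_under_countable: "countable (underS omega1 a)"
proof (cases "a \<in> Field omega1")
  case True
  have "|underS omega1 a| <o omega1"
    by (rule card_of_underS[OF cardSuc_Card_order[OF natLeq_Card_order] True])
  hence "|underS omega1 a| \<le>o natLeq"
    by (rule iffD1[OF cardSuc_ordLeq_ordLess[OF natLeq_Card_order card_of_Card_order]])
  thus ?thesis by (rule iffD2[OF countable_card_le_natLeq])
next
  case False
  have "underS omega1 a = {}" unfolding underS_def using False FieldI2 by fast
  thus ?thesis by (rule ssubst) (rule countable_empty)
qed

end

lemma lex_below: "(p, x) \<in> lexprod M L \<Longrightarrow> fst p \<in> insert (fst x) (underS M (fst x))"
  unfolding lexprod_def underS_def by auto

lemma R_below_countable: "countable {p. (p, x) \<in> R_order}"
proof -
  have "{p. (p, x) \<in> R_order} \<subseteq> insert (fst x) (underS omega1 (fst x)) \<times> (UNIV :: rat option set)"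
  proof (rule subsetI)
    fix p assume "p \<in> {p. (p, x) \<in> R_order}"
    hence "(p, x) \<in> lexprod omega1 pointQ" unfolding R_order_def by (rule CollectD)
    hence "fst p \<in> insert (fst x) (underS omega1 (fst x))" by (rule lex_below)
    thus "p \<in> insert (fst x) (underS omega1 (fst x)) \<times> (UNIV :: rat option set)"
      unfolding mem_Times_iff by (intro conjI) (assumption, rule UNIV_I)
  qed
  moreover have "countable (insert (fst x) (underS omega1 (fst x)) \<times> (UNIV :: rat option set))"
    by (rule countable_SIGMA) (rule countable_insert[OF omega1_under_countable], rule countableI_type)
  ultimately show ?thesis by (rule countable_subset)
qed

lemma osum_Inl2: "(x, Inl p) \<in> osum r s \<Longrightarrow> \<exists>x'. x = Inl x' \<and> (x', p) \<in> r"
  unfolding osum_def by auto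
lemma osum_Inr1: "(Inr p, y) \<in> osum r s \<Longrightarrow> \<exists>y'. y = Inr y' \<and> (p, y') \<in> s"
  unfolding osum_def by auto

definition U1 where "U1 a = {z. (a, z) \<in> U_order \<and> z \<in> range Inl}"
definition U2 where "U2 a = {z. (z, a) \<in> U_order \<and> z \<in> range (Inr \<circ> Inr)}"

lemma U1_countable: "countable (U1 a)"
proof -
  have "U1 a \<subseteq> Inl ` {p. (p, projl a) \<in> R_order}"
  proof
    fix z assume z: "z \<in> U1 a"
    then obtain p where p: "z = Inl p" and az: "(a, Inl p) \<in> U_order" unfolding U1_def by blast
    obtain x' where "a = Inl x'" "(x', p) \<in> converse R_order"
      using osum_Inl2[OF az[unfolded U_order_def]] by blast
    hence "(p, projl a) \<in> R_order" by simp
    thus "z \<in> Inl ` {p. (p, projl a) \<in> R_order}" using p by blast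
  qed
  moreover have "countable (Inl ` {p. (p, projl a) \<in> R_order})"
    by (rule countable_image[OF R_below_countable])
  ultimately show ?thesis by (rule countable_subset)
qed

lemma U2_countable: "countable (U2 a)"
proof -
  have "U2 a \<subseteq> (Inr \<circ> Inr) ` {p. (p, projr (projr a)) \<in> R_order}"
  proof
    fix z assume z: "z \<in> U2 a"
    then obtain p where p: "z = Inr (Inr p)" and az: "(Inr (Inr p), a) \<in> U_order" unfolding U2_def by auto
    obtain y' where y': "a = Inr y'" "(Inr p, y') \<in> osum ratQ R_order"
      using osum_Inr1[OF az[unfolded U_order_def]] by blast
    obtain y'' where "y' = Inr y''" "(p, y'') \<in> R_order"
      using osum_Inr1[OF y'(2)] by blast
    hence "(p, projr (projr a)) \<in> R_order" using y'(1) by simp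
    thus "z \<in> (Inr \<circ> Inr) ` {p. (p, projr (projr a)) \<in> R_order}" using p by force
  qed
  moreover have "countable ((Inr \<circ> Inr) ` {p. (p, projr (projr a)) \<in> R_order})"
    by (rule countable_image[OF R_below_countable])
  ultimately show ?thesis by (rule countable_subset)
qed

lemma U3_countable: "countable (range (Inr \<circ> Inl) :: ((nat set \<times> rat option) + (rat + (nat set \<times> rat option))) set)"
  by (rule countable_image) (rule countableI_type)


lemma lo_refl: "Linear_order r \<Longrightarrow> x \<in> Field r \<Longrightarrow> (x, x) \<in> r"
  unfolding order_on_defs refl_on_def by blast
lemma lo_trans: "Linear_order r \<Longrightarrow> (x, y) \<in> r \<Longrightarrow> (y, z) \<in> r \<Longrightarrow> (x, z) \<in> r"
  unfolding order_on_defs trans_def by blast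
lemma lo_antisym: "Linear_order r \<Longrightarrow> (x, y) \<in> r \<Longrightarrow> (y, x) \<in> r \<Longrightarrow> x = y"
  unfolding order_on_defs antisym_on_def by blast
lemma lo_total:
  assumes "Linear_order r" "x \<in> Field r" "y \<in> Field r" shows "(x, y) \<in> r \<or> (y, x) \<in> r"
proof (cases "x = y")
  case True thus ?thesis using lo_refl[OF assms(1,2)] by simp
next
  case False
  have "total_on (Field r) r" using assms(1) unfolding order_on_defs by blast
  thus ?thesis using False assms(2,3) unfolding total_on_def by blast
qed
lemma lo_intro:
  assumes "\<And>x. x \<in> Field r \<Longrightarrow> (x, x) \<in> r"
    "\<And>x y z. (x, y) \<in> r \<Longrightarrow> (y, z) \<in> r \<Longrightarrow> (x, z) \<in> r"
    "\<And>x y. (x, y) \<in> r \<Longrightarrow> (y, x) \<in> r \<Longrightarrow> x = y"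
    "\<And>x y. x \<in> Field r \<Longrightarrow> y \<in> Field r \<Longrightarrow> (x, y) \<in> r \<or> (y, x) \<in> r"
  shows "Linear_order r"
proof -
  have "r \<subseteq> Field r \<times> Field r"
  proof
    fix p assume "p \<in> r"
    then obtain a b where "p = (a, b)" "(a, b) \<in> r" by (cases p) blast
    thus "p \<in> Field r \<times> Field r" using FieldI1[of a b r] FieldI2[of a b r] by blast
  qed
  moreover have "refl_on (Field r) r" unfolding refl_on_def using assms(1) by blast
  moreover have "trans r" unfolding trans_def using assms(2) by blast
  moreover have "antisym r" unfolding antisym_on_def using assms(3) by blast
  moreover have "total_on (Field r) r" unfolding total_on_def using assms(4) by blast
  ultimately show ?thesis unfolding order_on_defs by blast
qed

lemma preimage_countable:
  assumes "inj_on f A" "countable B"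
  shows "countable {w \<in> A. f w \<in> B}"
proof -
  have "f ` {w \<in> A. f w \<in> B} \<subseteq> B" by auto
  hence c: "countable (f ` {w \<in> A. f w \<in> B})" by (rule countable_subset) (rule assms(2))
  have "{w \<in> A. f w \<in> B} \<subseteq> A" by auto
  hence i: "inj_on f {w \<in> A. f w \<in> B}" by (rule inj_on_subset[OF assms(1)])
  show ?thesis by (rule countable_image_inj_on[OF c i])
qed

definition P1 :: "'a rel \<Rightarrow> bool" where
  "P1 L \<longleftrightarrow> (\<forall>x\<in>Field L. \<forall>y\<in>Field L. countable (closed_interval L x y))"

definition P2 :: "'a rel \<Rightarrow> bool" where
  "P2 L \<longleftrightarrow> countable (Field L) \<or> (\<forall>l\<in>Field L. \<not> countable {x\<in>Field L. (l, x) \<in> L})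
      \<or> (\<forall>l\<in>Field L. \<not> countable {x\<in>Field L. (x, l) \<in> L})"

lemma in_X_P1:
  assumes "in_X L" shows "P1 L"
  unfolding P1_def
proof (intro ballI)
  fix x y assume x: "x \<in> Field L" and y: "y \<in> Field L"
  obtain f where f: "inj_on f (Field L)" "f ` Field L \<subseteq> Field U_order"
    "\<forall>x\<in>Field L. \<forall>y\<in>Field L. (x, y) \<in> L \<longleftrightarrow> (f x, f y) \<in> U_order"
    using assms unfolding in_X_def order_embeds_def by blast
  let ?B = "U1 (f x) \<union> U1 (f y) \<union> range (Inr \<circ> Inl) \<union> U2 (f x) \<union> U2 (f y)"
  have cB: "countable ?B" by (intro countable_Un U1_countable U2_countable U3_countable)
  have "closed_interval L x y \<subseteq> {w \<in> Field L. f w \<in> ?B}"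
  proof
    fix w assume w: "w \<in> closed_interval L x y"
    hence wF: "w \<in> Field L" unfolding closed_interval_def by auto
    from w have ord: "((f x, f w) \<in> U_order \<and> (f w, f y) \<in> U_order) \<or> ((f y, f w) \<in> U_order \<and> (f w, f x) \<in> U_order)"
      unfolding closed_interval_def using f(3) x y wF by auto
    hence "f w \<in> ?B"
    proof (cases "f w")
      case (Inl p)
      thus ?thesis using ord unfolding U1_def by blast
    next
      case (Inr b)
      show ?thesis
      proof (cases b)
        case (Inl q) thus ?thesis using Inr by simp
      next
        case (Inr p')
        hence "f w \<in> range (Inr \<circ> Inr)" using \<open>f w = Inr b\<close> by simp
        thus ?thesis using ord unfolding U2_def by blast
      qed
    qed
    with wF show "w \<in> {w \<in> Field L. f w \<in> ?B}" by auto
  qed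
  thus "countable (closed_interval L x y)" by (rule countable_subset[OF _ preimage_countable[OF f(1) cB]])
qed


lemma in_X_P2:
  assumes "in_X L" shows "P2 L"
proof -
  have lo: "Linear_order L" using assms unfolding in_X_def by blast
  obtain f where f: "inj_on f (Field L)" "f ` Field L \<subseteq> Field U_order"
    "\<forall>x\<in>Field L. \<forall>y\<in>Field L. (x, y) \<in> L \<longleftrightarrow> (f x, f y) \<in> U_order"
    using assms unfolding in_X_def order_embeds_def by blast
  define A1 where "A1 = {w \<in> Field L. f w \<in> range Inl}"
  define A2 where "A2 = {w \<in> Field L. f w \<in> range (Inr \<circ> Inl)}"
  define A3 where "A3 = {w \<in> Field L. f w \<in> range (Inr \<circ> Inr)}"
  have split: "Field L \<subseteq> A1 \<union> A2 \<union> A3"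
  proof
    fix w assume w: "w \<in> Field L"
    show "w \<in> A1 \<union> A2 \<union> A3"
    proof (cases "f w")
      case (Inl p) thus ?thesis using w unfolding A1_def by blast
    next
      case (Inr b)
      show ?thesis
      proof (cases b)
        case (Inl q)
        hence "f w \<in> range (Inr \<circ> Inl)" using Inr by simp
        thus ?thesis using w unfolding A2_def by blast
      next
        case (Inr p')
        hence "f w \<in> range (Inr \<circ> Inr)" using \<open>f w = Inr b\<close> by simp
        thus ?thesis using w unfolding A3_def by blast
      qed
    qed
  qed
  have cA2: "countable A2" unfolding A2_def using preimage_countable[OF f(1) U3_countable] .
  show ?thesis
  proof (cases "countable (Field L)")
    case True thus ?thesis unfolding P2_def by blast
  next
    case False
    have "\<not> countable A1 \<or> \<not> countable A3"
    proof (rule ccontr)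
      assume "\<not> (\<not> countable A1 \<or> \<not> countable A3)"
      hence "countable (A1 \<union> A2 \<union> A3)" using cA2 by simp
      hence "countable (Field L)" by (rule countable_subset[OF split])
      thus False using False by simp
    qed
    thus ?thesis
    proof
      assume nA3: "\<not> countable A3"
      have "\<forall>l\<in>Field L. \<not> countable {x\<in>Field L. (l, x) \<in> L}"
      proof (intro ballI notI)
        fix l assume l: "l \<in> Field L" and c: "countable {x\<in>Field L. (l, x) \<in> L}"
        have "A3 \<subseteq> {x\<in>Field L. (l, x) \<in> L} \<union> {w \<in> Field L. f w \<in> U2 (f l)}"
        proof
          fix w assume w: "w \<in> A3"
          hence wF: "w \<in> Field L" unfolding A3_def by auto
          show "w \<in> {x\<in>Field L. (l, x) \<in> L} \<union> {w \<in> Field L. f w \<in> U2 (f l)}"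
          proof (cases "(l, w) \<in> L")
            case True thus ?thesis using wF by auto
          next
            case False
            hence "(w, l) \<in> L" using lo_total[OF lo l wF] by auto
            hence "(f w, f l) \<in> U_order" using f(3) l wF by auto
            thus ?thesis using w unfolding A3_def U2_def by auto
          qed
        qed
        moreover have "countable {w \<in> Field L. f w \<in> U2 (f l)}"
          using preimage_countable[OF f(1) U2_countable] .
        ultimately have "countable ({x\<in>Field L. (l, x) \<in> L} \<union> {w \<in> Field L. f w \<in> U2 (f l)})"
          using c by simp
        thus False using nA3 countable_subset[OF \<open>A3 \<subseteq> _\<close>] by blast
      qed
      thus ?thesis unfolding P2_def by blast
    next
      assume nA1: "\<not> countable A1"
      have "\<forall>l\<in>Field L. \<not> countable {x\<in>Field L. (x, l) \<in> L}"
      proof (intro ballI notI)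
        fix l assume l: "l \<in> Field L" and c: "countable {x\<in>Field L. (x, l) \<in> L}"
        have "A1 \<subseteq> {x\<in>Field L. (x, l) \<in> L} \<union> {w \<in> Field L. f w \<in> U1 (f l)}"
        proof
          fix w assume w: "w \<in> A1"
          hence wF: "w \<in> Field L" unfolding A1_def by auto
          show "w \<in> {x\<in>Field L. (x, l) \<in> L} \<union> {w \<in> Field L. f w \<in> U1 (f l)}"
          proof (cases "(w, l) \<in> L")
            case True thus ?thesis using wF by auto
          next
            case False
            hence "(l, w) \<in> L" using lo_total[OF lo l wF] by auto
            hence "(f l, f w) \<in> U_order" using f(3) l wF by auto
            thus ?thesis using w unfolding A1_def U1_def by auto
          qed
        qed
        moreover have "countable {w \<in> Field L. f w \<in> U1 (f l)}"
          using preimage_countable[OF f(1) U1_countable] .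
        ultimately have "countable ({x\<in>Field L. (x, l) \<in> L} \<union> {w \<in> Field L. f w \<in> U1 (f l)})"
          using c by simp
        thus False using nA1 countable_subset[OF \<open>A1 \<subseteq> _\<close>] by blast
      qed
      thus ?thesis unfolding P2_def by blast
    qed
  qed
qed


lemma order_iso_sym:
  assumes "order_iso r s" shows "order_iso s r"
proof -
  obtain f where f: "bij_betw f (Field r) (Field s)"
    "\<forall>x\<in>Field r. \<forall>y\<in>Field r. (x, y) \<in> r \<longleftrightarrow> (f x, f y) \<in> s"
    using assms unfolding order_iso_def by blast
  define g where "g = the_inv_into (Field r) f"
  have g: "bij_betw g (Field s) (Field r)" unfolding g_def by (rule bij_betw_the_inv_into[OF f(1)])
  have fg: "f (g a) = a" if "a \<in> Field s" for a unfolding g_def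
    by (rule f_the_inv_into_f_bij_betw[OF f(1)]) (rule that)
  have "\<forall>a\<in>Field s. \<forall>b\<in>Field s. (a, b) \<in> s \<longleftrightarrow> (g a, g b) \<in> r"
  proof (intro ballI)
    fix a b assume a: "a \<in> Field s" and b: "b \<in> Field s"
    have ga: "g a \<in> Field r" by (rule bij_betwE[OF g, rule_format, OF a])
    have gb: "g b \<in> Field r" by (rule bij_betwE[OF g, rule_format, OF b])
    have "(g a, g b) \<in> r \<longleftrightarrow> (f (g a), f (g b)) \<in> s" using f(2) ga gb by blast
    thus "(a, b) \<in> s \<longleftrightarrow> (g a, g b) \<in> r" unfolding fg[OF a] fg[OF b] by simp
  qed
  thus ?thesis unfolding order_iso_def using g by blast
qed

lemma order_iso_trans:
  assumes "order_iso r s" "order_iso s t" shows "order_iso r t"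
proof -
  obtain f where f: "bij_betw f (Field r) (Field s)"
    "\<forall>x\<in>Field r. \<forall>y\<in>Field r. (x, y) \<in> r \<longleftrightarrow> (f x, f y) \<in> s"
    using assms(1) unfolding order_iso_def by blast
  obtain g where g: "bij_betw g (Field s) (Field t)"
    "\<forall>x\<in>Field s. \<forall>y\<in>Field s. (x, y) \<in> s \<longleftrightarrow> (g x, g y) \<in> t"
    using assms(2) unfolding order_iso_def by blast
  have b: "bij_betw (g \<circ> f) (Field r) (Field t)" by (rule bij_betw_trans[OF f(1) g(1)])
  have "\<forall>x\<in>Field r. \<forall>y\<in>Field r. (x, y) \<in> r \<longleftrightarrow> ((g \<circ> f) x, (g \<circ> f) y) \<in> t"
  proof (intro ballI)
    fix x y assume x: "x \<in> Field r" and y: "y \<in> Field r"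
    have fx: "f x \<in> Field s" by (rule bij_betwE[OF f(1), rule_format, OF x])
    have fy: "f y \<in> Field s" by (rule bij_betwE[OF f(1), rule_format, OF y])
    show "(x, y) \<in> r \<longleftrightarrow> ((g \<circ> f) x, (g \<circ> f) y) \<in> t"
      using f(2) g(2) x y fx fy by simp
  qed
  thus ?thesis unfolding order_iso_def using b by blast
qed

lemma order_iso_empty:
  assumes "Field r = {}" "Field s = {}" shows "order_iso r s"
  unfolding order_iso_def assms by (rule exI[of _ "\<lambda>_. undefined"]) (simp add: bij_betw_def)

lemma Field_single: "Field {(C, C)} = {C}" unfolding Field_def by auto

lemma order_iso_single: "order_iso {(C, C)} {(D, D)}"
  unfolding order_iso_def Field_single by (rule exI[of _ "\<lambda>_. D"]) (auto simp: bij_betw_def)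

lemma order_iso_countable:
  assumes "order_iso r s" shows "countable (Field r) \<longleftrightarrow> countable (Field s)"
proof -
  obtain f where f: "bij_betw f (Field r) (Field s)"
    using assms unfolding order_iso_def by blast
  show ?thesis by (rule countable_iff_bij[OF f])
qed

lemma order_iso_linear:
  assumes "order_iso r s" "Linear_order s" shows "Linear_order r"
proof -
  obtain f where f: "bij_betw f (Field r) (Field s)"
    "\<forall>x\<in>Field r. \<forall>y\<in>Field r. (x, y) \<in> r \<longleftrightarrow> (f x, f y) \<in> s"
    using assms(1) unfolding order_iso_def by blast
  have fF: "\<And>x. x \<in> Field r \<Longrightarrow> f x \<in> Field s" by (rule bij_betwE[OF f(1), rule_format])
  have inj: "inj_on f (Field r)" using f(1) unfolding bij_betw_def by blast
  show ?thesis
  proof (rule lo_intro)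
    fix x assume x: "x \<in> Field r"
    have "(f x, f x) \<in> s" by (rule lo_refl[OF assms(2) fF[OF x]])
    thus "(x, x) \<in> r" using f(2) x by blast
  next
    fix x y z assume xy: "(x, y) \<in> r" and yz: "(y, z) \<in> r"
    have F: "x \<in> Field r" "y \<in> Field r" "z \<in> Field r"
      using FieldI1[OF xy] FieldI2[OF xy] FieldI2[OF yz] .
    have "(f x, f y) \<in> s" "(f y, f z) \<in> s" using f(2) F xy yz by blast+
    hence "(f x, f z) \<in> s" by (rule lo_trans[OF assms(2)])
    thus "(x, z) \<in> r" using f(2) F by blast
  next
    fix x y assume xy: "(x, y) \<in> r" and yx: "(y, x) \<in> r"
    have F: "x \<in> Field r" "y \<in> Field r" using FieldI1[OF xy] FieldI2[OF xy] .
    have "(f x, f y) \<in> s" "(f y, f x) \<in> s" using f(2) F xy yx by blast+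
    hence "f x = f y" by (rule lo_antisym[OF assms(2)])
    thus "x = y" using inj F unfolding inj_on_def by blast
  next
    fix x y assume x: "x \<in> Field r" and y: "y \<in> Field r"
    have "(f x, f y) \<in> s \<or> (f y, f x) \<in> s" by (rule lo_total[OF assms(2) fF[OF x] fF[OF y]])
    thus "(x, y) \<in> r \<or> (y, x) \<in> r" using f(2) x y by blast
  qed
qed

lemma order_iso_in_X:
  assumes "order_iso r s" "in_X s" shows "in_X r"
proof -
  have los: "Linear_order s" using assms(2) unfolding in_X_def by blast
  have lo: "Linear_order r" by (rule order_iso_linear[OF assms(1) los])
  obtain f where f: "bij_betw f (Field r) (Field s)"
    "\<forall>x\<in>Field r. \<forall>y\<in>Field r. (x, y) \<in> r \<longleftrightarrow> (f x, f y) \<in> s"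
    using assms(1) unfolding order_iso_def by blast
  obtain g where g: "inj_on g (Field s)" "g ` Field s \<subseteq> Field U_order"
    "\<forall>x\<in>Field s. \<forall>y\<in>Field s. (x, y) \<in> s \<longleftrightarrow> (g x, g y) \<in> U_order"
    using assms(2) unfolding in_X_def order_embeds_def by blast
  have fF: "\<And>x. x \<in> Field r \<Longrightarrow> f x \<in> Field s" by (rule bij_betwE[OF f(1), rule_format])
  have "inj_on (g \<circ> f) (Field r)"
  proof (rule comp_inj_on)
    show "inj_on f (Field r)" using f(1) unfolding bij_betw_def by blast
    have "f ` Field r = Field s" using f(1) unfolding bij_betw_def by blast
    thus "inj_on g (f ` Field r)" using g(1) by simp
  qed
  moreover have "(g \<circ> f) ` Field r \<subseteq> Field U_order" using fF g(2) by auto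
  moreover have "\<forall>x\<in>Field r. \<forall>y\<in>Field r. (x, y) \<in> r \<longleftrightarrow> ((g \<circ> f) x, (g \<circ> f) y) \<in> U_order"
    using f(2) g(3) fF by simp
  ultimately show ?thesis using lo unfolding in_X_def order_embeds_def by blast
qed

lemma in_X_empty: "Field r = {} \<Longrightarrow> in_X r"
proof -
  assume "Field r = {}"
  hence "r = {}" unfolding Field_def by auto
  thus "in_X r" unfolding in_X_def order_embeds_def by simp
qed

lemma in_X_single: "in_X {(C, C)}"
proof -
  have "(Inl 0, Inl 0) \<in> osum ratQ R_order" unfolding osum_def ratQ_def by blast
  hence uu: "(Inr (Inl 0), Inr (Inl 0)) \<in> U_order" unfolding U_order_def osum_def by blast
  hence u: "Inr (Inl 0) \<in> Field U_order" by (rule FieldI1)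
  have "Linear_order {(C, C)}" by (rule lo_intro) (auto simp: Field_single)
  moreover have "order_embeds {(C, C)} U_order"
    unfolding order_embeds_def Field_single
    by (rule exI[of _ "\<lambda>_. Inr (Inl 0)"]) (simp add: u uu)
  ultimately show ?thesis unfolding in_X_def by blast
qed


lemma lex_Field:
  assumes "Linear_order M" "Linear_order L"
  shows "Field (lexprod M L) = Field M \<times> Field L"
proof
  show "Field (lexprod M L) \<subseteq> Field M \<times> Field L" unfolding lexprod_def Field_def by auto
next
  show "Field M \<times> Field L \<subseteq> Field (lexprod M L)"
  proof
    fix x assume "x \<in> Field M \<times> Field L"
    then obtain m l where "x = (m, l)" "m \<in> Field M" "l \<in> Field L" by auto
    hence "(x, x) \<in> lexprod M L" unfolding lexprod_def using lo_refl[OF assms(2)] by auto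
    thus "x \<in> Field (lexprod M L)" by (rule FieldI1)
  qed
qed

lemma lex_refl:
  assumes "Linear_order M" "Linear_order L" "x \<in> Field (lexprod M L)"
  shows "(x, x) \<in> lexprod M L"
  using assms lex_Field[OF assms(1,2)] lo_refl[OF assms(2)] unfolding lexprod_def by auto

lemma lex_antisym:
  assumes "Linear_order M" "Linear_order L" "(x, y) \<in> lexprod M L" "(y, x) \<in> lexprod M L"
  shows "x = y"
  using assms(3,4) lo_antisym[OF assms(1)] lo_antisym[OF assms(2)] unfolding lexprod_def by auto

lemma lex_fst:
  assumes "Linear_order M" "((m, l), (a, b)) \<in> lexprod M L"
  shows "(m, a) \<in> M"
  using assms(2) lo_refl[OF assms(1)] unfolding lexprod_def by auto

lemma ci_sym: "closed_interval r x y = closed_interval r y x"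
  unfolding closed_interval_def by auto

lemma cc_Field:
  assumes refl: "\<And>x. x \<in> Field r \<Longrightarrow> (x, x) \<in> r"
    and anti: "\<And>x y. (x, y) \<in> r \<Longrightarrow> (y, x) \<in> r \<Longrightarrow> x = y"
  shows "Field (count_cond r) = Field r // count_equiv r"
proof
  show "Field (count_cond r) \<subseteq> Field r // count_equiv r"
    unfolding count_cond_def Field_def by auto
next
  show "Field r // count_equiv r \<subseteq> Field (count_cond r)"
  proof
    fix C assume C: "C \<in> Field r // count_equiv r"
    then obtain x where x: "x \<in> Field r" "C = count_equiv r `` {x}" unfolding quotient_def by auto
    have "closed_interval r x x \<subseteq> {x}" unfolding closed_interval_def using anti by auto
    hence "countable (closed_interval r x x)" by (rule countable_subset) (rule countable_insert[OF countable_empty])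
    hence "x \<in> C" using x unfolding count_equiv_def by auto
    hence "(C, C) \<in> count_cond r" using C refl x(1) unfolding count_cond_def by blast
    thus "C \<in> Field (count_cond r)" by (rule FieldI1)
  qed
qed

lemma om_Field:
  assumes "Linear_order M" "Linear_order L"
  shows "Field (omega_mult M L) = (Field M \<times> Field L) // count_equiv (lexprod M L)"
  unfolding omega_mult_def
  using cc_Field[of "lexprod M L"] lex_refl[OF assms] lex_antisym[OF assms] lex_Field[OF assms]
  by metis

lemma om_empty:
  assumes "Linear_order M" "Linear_order L" "Field M = {} \<or> Field L = {}"
  shows "Field (omega_mult M L) = {}"
  using om_Field[OF assms(1,2)] assms(3) by auto

lemma om_nonempty:
  assumes "Linear_order M" "Linear_order L" "Field M \<noteq> {}" "Field L \<noteq> {}"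
  shows "Field (omega_mult M L) \<noteq> {}"
  using om_Field[OF assms(1,2)] assms(3,4) unfolding quotient_def by auto


lemma mult_count:
  assumes M: "Linear_order M" and L: "Linear_order L" and p1: "P1 M"
    and cL: "countable (Field L)" and nM: "Field M \<noteq> {}" and nL: "Field L \<noteq> {}"
  shows "\<exists>C. omega_mult M L = {(C, C)}"
proof -
  let ?r = "lexprod M L"
  let ?F = "Field M \<times> Field L"
  have F: "Field ?r = ?F" using lex_Field[OF M L] .
  have all: "\<And>x y. x \<in> ?F \<Longrightarrow> y \<in> ?F \<Longrightarrow> countable (closed_interval ?r x y)"
  proof -
    fix x y assume x: "x \<in> ?F" and y: "y \<in> ?F"
    obtain m l m' l' where xy: "x = (m, l)" "y = (m', l')" by (cases x, cases y) auto
    have sub: "closed_interval ?r x y \<subseteq> closed_interval M m m' \<times> Field L"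
    proof
      fix z assume z: "z \<in> closed_interval ?r x y"
      obtain a b where zab: "z = (a, b)" by (cases z)
      have zF: "a \<in> Field M" "b \<in> Field L" using z F zab unfolding closed_interval_def by auto
      have "(((m, l), (a, b)) \<in> ?r \<and> ((a, b), (m', l')) \<in> ?r) \<or> (((m', l'), (a, b)) \<in> ?r \<and> ((a, b), (m, l)) \<in> ?r)"
        using z zab xy unfolding closed_interval_def by simp
      hence "((m, a) \<in> M \<and> (a, m') \<in> M) \<or> ((m', a) \<in> M \<and> (a, m) \<in> M)"
      proof (elim disjE conjE)
        assume h1: "((m, l), (a, b)) \<in> ?r" and h2: "((a, b), (m', l')) \<in> ?r"
        show ?thesis by (intro disjI1 conjI) (rule lex_fst[OF M h1], rule lex_fst[OF M h2])
      next
        assume h1: "((m', l'), (a, b)) \<in> ?r" and h2: "((a, b), (m, l)) \<in> ?r"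
        show ?thesis by (intro disjI2 conjI) (rule lex_fst[OF M h1], rule lex_fst[OF M h2])
      qed
      thus "z \<in> closed_interval M m m' \<times> Field L" using zab zF unfolding closed_interval_def by auto
    qed
    moreover have cM: "countable (closed_interval M m m')" using p1 x y xy unfolding P1_def by auto
    show "countable (closed_interval ?r x y)"
      by (rule countable_subset[OF sub countable_SIGMA[OF cM cL]])
  qed
  have cls: "\<And>x. x \<in> ?F \<Longrightarrow> count_equiv ?r `` {x} = ?F"
    using all F unfolding count_equiv_def by auto
  have q: "?F // count_equiv ?r = {?F}"
    using nM nL cls unfolding quotient_def by auto
  have "count_cond ?r = {(?F, ?F)}"
  proof
    show "count_cond ?r \<subseteq> {(?F, ?F)}" using q F unfolding count_cond_def by auto
  next
    obtain x where x: "x \<in> ?F" using nM nL by auto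
    have "(x, x) \<in> ?r" using lex_refl[OF M L] x F by auto
    thus "{(?F, ?F)} \<subseteq> count_cond ?r" using q F x unfolding count_cond_def by auto
  qed
  thus ?thesis unfolding omega_mult_def by blast
qed

lemma mult_unc:
  fixes M :: "'a rel" and L :: "'b rel"
  assumes M: "Linear_order M" and L: "Linear_order L" and p1: "P1 L" and p2: "P2 L"
    and uL: "\<not> countable (Field L)"
  shows "order_iso M (omega_mult M L)"
proof -
  let ?r = "lexprod M L"
  let ?F = "Field M \<times> Field L"
  have F: "Field ?r = ?F" using lex_Field[OF M L] .
  have "Field L \<noteq> {}"
  proof
    assume "Field L = {}" thus False using uL by simp
  qed
  then obtain l0 where l0: "l0 \<in> Field L" by blast
  have same: "\<And>m l l'. m \<in> Field M \<Longrightarrow> l \<in> Field L \<Longrightarrow> l' \<in> Field L \<Longrightarrow>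
      countable (closed_interval ?r (m, l) (m, l'))"
  proof -
    fix m l l' assume m: "m \<in> Field M" and l: "l \<in> Field L" and l': "l' \<in> Field L"
    have sub: "closed_interval ?r (m, l) (m, l') \<subseteq> {m} \<times> closed_interval L l l'"
    proof
      fix z assume z: "z \<in> closed_interval ?r (m, l) (m, l')"
      obtain a b where zab: "z = (a, b)" by (cases z)
      have zF: "a \<in> Field M" "b \<in> Field L" using z F zab unfolding closed_interval_def by auto
      have "(((m, l), (a, b)) \<in> ?r \<and> ((a, b), (m, l')) \<in> ?r) \<or>
            (((m, l'), (a, b)) \<in> ?r \<and> ((a, b), (m, l)) \<in> ?r)"
        using z zab unfolding closed_interval_def by auto
      moreover have "a = m" using calculation
      proof (elim disjE conjE)
        assume h1: "((m, l), (a, b)) \<in> ?r" and h2: "((a, b), (m, l')) \<in> ?r"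
        show "a = m" by (rule lo_antisym[OF M lex_fst[OF M h2] lex_fst[OF M h1]])
      next
        assume h1: "((m, l'), (a, b)) \<in> ?r" and h2: "((a, b), (m, l)) \<in> ?r"
        show "a = m" by (rule lo_antisym[OF M lex_fst[OF M h2] lex_fst[OF M h1]])
      qed
      ultimately have "((l, b) \<in> L \<and> (b, l') \<in> L) \<or> ((l', b) \<in> L \<and> (b, l) \<in> L)"
        unfolding lexprod_def by auto
      thus "z \<in> {m} \<times> closed_interval L l l'" using zab zF \<open>a = m\<close> unfolding closed_interval_def by auto
    qed
    moreover have cI: "countable (closed_interval L l l')" using p1 l l' unfolding P1_def by auto
    show "countable (closed_interval ?r (m, l) (m, l'))"
      by (rule countable_subset[OF sub countable_SIGMA[OF countable_insert[OF countable_empty] cI]])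
  qed
  have diff1: "\<And>m m' l l'. (m, m') \<in> M \<Longrightarrow> m \<noteq> m' \<Longrightarrow> l \<in> Field L \<Longrightarrow> l' \<in> Field L \<Longrightarrow>
      \<not> countable (closed_interval ?r (m, l) (m', l'))"
  proof
    fix m m' l l' assume mm: "(m, m') \<in> M" "m \<noteq> m'" and l: "l \<in> Field L" and l': "l' \<in> Field L"
      and c: "countable (closed_interval ?r (m, l) (m', l'))"
    have mF: "m \<in> Field M" "m' \<in> Field M" using mm(1) by (auto simp: FieldI1 FieldI2)
    have s1: "Pair m ` {x\<in>Field L. (l, x) \<in> L} \<subseteq> closed_interval ?r (m, l) (m', l')"
      unfolding closed_interval_def F unfolding lexprod_def using mF mm l l' by auto
    have s2: "Pair m' ` {x\<in>Field L. (x, l') \<in> L} \<subseteq> closed_interval ?r (m, l) (m', l')"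
      unfolding closed_interval_def F unfolding lexprod_def using mF mm l l' by auto
    have i1: "inj_on (Pair m) {x\<in>Field L. (l, x) \<in> L}" by (rule inj_onI) simp
    have i2: "inj_on (Pair m') {x\<in>Field L. (x, l') \<in> L}" by (rule inj_onI) simp
    have "countable {x\<in>Field L. (l, x) \<in> L}"
      by (rule countable_image_inj_on[OF countable_subset[OF s1 c] i1])
    moreover have "countable {x\<in>Field L. (x, l') \<in> L}"
      by (rule countable_image_inj_on[OF countable_subset[OF s2 c] i2])
    ultimately show False using p2 uL l l' unfolding P2_def by blast
  qed
  have cls: "\<And>m l. m \<in> Field M \<Longrightarrow> l \<in> Field L \<Longrightarrow> count_equiv ?r `` {(m, l)} = {m} \<times> Field L"
  proof -
    fix m l assume m: "m \<in> Field M" and l: "l \<in> Field L"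
    show "count_equiv ?r `` {(m, l)} = {m} \<times> Field L"
    proof
      show "count_equiv ?r `` {(m, l)} \<subseteq> {m} \<times> Field L"
      proof
        fix y assume y: "y \<in> count_equiv ?r `` {(m, l)}"
        obtain m' l' where yy: "y = (m', l')" by (cases y)
        have yF: "m' \<in> Field M" "l' \<in> Field L" and c: "countable (closed_interval ?r (m, l) (m', l'))"
          using y yy F unfolding count_equiv_def by auto
        have "m' = m"
        proof (rule ccontr)
          assume ne: "m' \<noteq> m"
          show False
          proof (cases "(m, m') \<in> M")
            case True
            have "\<not> countable (closed_interval ?r (m, l) (m', l'))"
              by (rule diff1[OF True ne[symmetric] l yF(2)])
            thus False using c by blast
          next
            case False
            hence "(m', m) \<in> M" using lo_total[OF M m yF(1)] by auto
            hence "\<not> countable (closed_interval ?r (m', l') (m, l))"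
              by (rule diff1[OF _ ne yF(2) l])
            moreover have "countable (closed_interval ?r (m', l') (m, l))"
              by (subst ci_sym) (rule c)
            ultimately show False by blast
          qed
        qed
        thus "y \<in> {m} \<times> Field L" using yy yF by auto
      qed
    next
      show "{m} \<times> Field L \<subseteq> count_equiv ?r `` {(m, l)}"
        using same m l F unfolding count_equiv_def by auto
    qed
  qed
  define phi where "phi m = {m} \<times> Field L" for m :: 'a
  have FO: "Field (omega_mult M L) = ?F // count_equiv ?r" using om_Field[OF M L] .
  have bij: "bij_betw phi (Field M) (Field (omega_mult M L))"
    unfolding bij_betw_def
  proof
    show "inj_on phi (Field M)" unfolding inj_on_def phi_def using l0 by auto
  next
    show "phi ` Field M = Field (omega_mult M L)"
    proof
      show "phi ` Field M \<subseteq> Field (omega_mult M L)"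
      proof
        fix C assume "C \<in> phi ` Field M"
        then obtain m where m: "m \<in> Field M" "C = phi m" by blast
        have "C = count_equiv ?r `` {(m, l0)}" unfolding m(2) phi_def using cls[OF m(1) l0] by simp
        moreover have "(m, l0) \<in> ?F" using m(1) l0 by simp
        ultimately show "C \<in> Field (omega_mult M L)" unfolding FO by (simp add: quotientI)
      qed
    next
      show "Field (omega_mult M L) \<subseteq> phi ` Field M"
        unfolding FO phi_def quotient_def using cls by auto
    qed
  qed
  have ord: "\<forall>x\<in>Field M. \<forall>y\<in>Field M. (x, y) \<in> M \<longleftrightarrow> (phi x, phi y) \<in> omega_mult M L"
  proof (intro ballI iffI)
    fix x y assume x: "x \<in> Field M" and y: "y \<in> Field M" and xy: "(x, y) \<in> M"
    have "((x, l0), (y, l0)) \<in> ?r" unfolding lexprod_def using x y xy l0 lo_refl[OF L] by auto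
    moreover have "phi x \<in> Field ?r // count_equiv ?r" "phi y \<in> Field ?r // count_equiv ?r"
      using bij_betwE[OF bij, rule_format, OF x] bij_betwE[OF bij, rule_format, OF y]
      unfolding FO F by simp_all
    ultimately show "(phi x, phi y) \<in> omega_mult M L"
      unfolding omega_mult_def count_cond_def phi_def using l0 by blast
  next
    fix x y assume x: "x \<in> Field M" and y: "y \<in> Field M" and xy: "(phi x, phi y) \<in> omega_mult M L"
    then obtain a b where "a \<in> phi x" "b \<in> phi y" "(a, b) \<in> ?r"
      unfolding omega_mult_def count_cond_def by blast
    thus "(x, y) \<in> M" unfolding phi_def using lex_fst[OF M] by auto
  qed
  show ?thesis unfolding order_iso_def using bij ord by blast
qed


lemma closure:
  assumes "in_X M" "in_X L" shows "in_X (omega_mult M L)"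
proof -
  have M: "Linear_order M" and L: "Linear_order L" using assms unfolding in_X_def by auto
  show ?thesis
  proof (cases "Field M = {} \<or> Field L = {}")
    case True thus ?thesis by (rule in_X_empty[OF om_empty[OF M L]])
  next
    case ne: False
    show ?thesis
    proof (cases "countable (Field L)")
      case True
      then obtain C where "omega_mult M L = {(C, C)}"
        using mult_count[OF M L in_X_P1[OF assms(1)]] ne by blast
      thus ?thesis using in_X_single by simp
    next
      case False
      hence "order_iso M (omega_mult M L)"
        by (rule mult_unc[OF M L in_X_P1[OF assms(2)] in_X_P2[OF assms(2)]])
      thus ?thesis by (rule order_iso_in_X[OF order_iso_sym assms(1)])
    qed
  qed
qed

theorem theorem5p4:
  fixes M :: "'a rel" and L :: "'b rel" and K :: "'c rel"
  assumes "in_X M" and "in_X L" and "in_X K"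
  shows "in_X (omega_mult M L) \<and>
         order_iso (omega_mult (omega_mult M L) K) (omega_mult M (omega_mult L K))"
proof
  show XML: "in_X (omega_mult M L)" by (rule closure[OF assms(1,2)])
  have XLK: "in_X (omega_mult L K)" by (rule closure[OF assms(2,3)])
  have M: "Linear_order M" and L: "Linear_order L" and K: "Linear_order K"
    using assms unfolding in_X_def by auto
  have hML: "Linear_order (omega_mult M L)" and LK: "Linear_order (omega_mult L K)"
    using XML XLK unfolding in_X_def by auto
  show "order_iso (omega_mult (omega_mult M L) K) (omega_mult M (omega_mult L K))"
  proof (cases "Field M = {} \<or> Field L = {} \<or> Field K = {}")
    case True
    have "Field (omega_mult (omega_mult M L) K) = {}"
    proof (cases "Field K = {}")
      case True thus ?thesis using om_empty[OF hML K] by blast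
    next
      case False
      hence "Field M = {} \<or> Field L = {}" using \<open>Field M = {} \<or> Field L = {} \<or> Field K = {}\<close> by blast
      hence "Field (omega_mult M L) = {}" using om_empty[OF M L] by blast
      thus ?thesis using om_empty[OF hML K] by blast
    qed
    moreover have "Field (omega_mult M (omega_mult L K)) = {}"
    proof (cases "Field M = {}")
      case True thus ?thesis using om_empty[OF M LK] by blast
    next
      case False
      hence "Field L = {} \<or> Field K = {}" using \<open>Field M = {} \<or> Field L = {} \<or> Field K = {}\<close> by blast
      hence "Field (omega_mult L K) = {}" using om_empty[OF L K] by blast
      thus ?thesis using om_empty[OF M LK] by blast
    qed
    ultimately show ?thesis by (rule order_iso_empty)
  next
    case False
    hence nM: "Field M \<noteq> {}" and nL: "Field L \<noteq> {}" and nK: "Field K \<noteq> {}" by auto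
    have nML: "Field (omega_mult M L) \<noteq> {}" using om_nonempty[OF M L nM nL] .
    have nLK: "Field (omega_mult L K) \<noteq> {}" using om_nonempty[OF L K nL nK] .
    show ?thesis
    proof (cases "countable (Field K)")
      case True
      obtain C where C: "omega_mult (omega_mult M L) K = {(C, C)}"
        using mult_count[OF hML K in_X_P1[OF XML] True nML nK] by blast
      obtain D where D: "omega_mult L K = {(D, D)}"
        using mult_count[OF L K in_X_P1[OF assms(2)] True nL nK] by blast
      have "countable (Field (omega_mult L K))" using D Field_single by simp
      then obtain E where E: "omega_mult M (omega_mult L K) = {(E, E)}"
        using mult_count[OF M LK in_X_P1[OF assms(1)] _ nM nLK] by blast
      show ?thesis using C E order_iso_single by simp
    next
      case uK: False
      have i1: "order_iso (omega_mult (omega_mult M L) K) (omega_mult M L)"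
        by (rule order_iso_sym[OF mult_unc[OF hML K in_X_P1[OF assms(3)] in_X_P2[OF assms(3)] uK]])
      have i2: "order_iso L (omega_mult L K)"
        by (rule mult_unc[OF L K in_X_P1[OF assms(3)] in_X_P2[OF assms(3)] uK])
      show ?thesis
      proof (cases "countable (Field L)")
        case True
        obtain C where C: "omega_mult M L = {(C, C)}"
          using mult_count[OF M L in_X_P1[OF assms(1)] True nM nL] by blast
        have "countable (Field (omega_mult L K))" using True order_iso_countable[OF i2] by simp
        then obtain E where E: "omega_mult M (omega_mult L K) = {(E, E)}"
          using mult_count[OF M LK in_X_P1[OF assms(1)] _ nM nLK] by blast
        have "order_iso (omega_mult M L) (omega_mult M (omega_mult L K))" unfolding C E by (rule order_iso_single)
        thus ?thesis by (rule order_iso_trans[OF i1])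
      next
        case uL: False
        have i3: "order_iso M (omega_mult M L)"
          using mult_unc[OF M L in_X_P1[OF assms(2)] in_X_P2[OF assms(2)] uL] .
        have "\<not> countable (Field (omega_mult L K))" using uL order_iso_countable[OF i2] by simp
        hence i4: "order_iso M (omega_mult M (omega_mult L K))"
          by (rule mult_unc[OF M LK in_X_P1[OF XLK] in_X_P2[OF XLK]])
        show ?thesis by (rule order_iso_trans[OF i1 order_iso_trans[OF order_iso_sym[OF i3] i4]])
      qed
    qed
  qed
qed

end
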